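(* In the setting of the context, $f(a,b)=\rho(h_{ab})-\rho(h_a)-\rho(h_b)$ for all $a,b\in A$.
   Context: Conventions: $[x,y]=x^{-1}y^{-1}xy$; $G$ acts on $V$ on the right, $[v,g]=-v+vg$; $[X,Y]$ is the subgroup generated by commutators, $[X,Y,Z]=[[X,Y],Z]$; $A^\#=A\setminus\{1\}$. Setting: $G=\langle A,B\rangle$ is an abstract rank one group with unipotent subgroups $A,B$ (distinct nilpotent; for each $a\in A^\#$ some $b(a)\in B^\#$ with $B^a=A^{b(a)}$, and vice versa). $\mu_a=b(a^{-1})ab(a)^{-1}$, $H=\langle\mu_a\mu_c:a,c\in A^\#\rangle$. $V$ is a $\mathbb{Z}G$-module with $[V,A,A,A]=0$, $[V,G,G,G]\neq0$, $[V,G]=V$, $C_V(G)=0$. $A_0=C_A([V,A])\cap C_A(V/C_V(A))\neq1$. Fix $e\in A_0^\#$ (with $e=a^2$ for some $a\in A$ if $V$ has exponent 2 and $A$ is non-abelian), $\mu=\mu_{e^{-1}}$, $h_a=\mu\mu_a$ for $a\in A^\#$, $h_1=0$; $\rho(h)$ = restriction of $h\in H$ to $C_V(A)$, $\rho(h_1)=0$. $f:A\times A\to\mathrm{End}(C_V(A))$ is defined by $vf(a,b)=[v\mu,a,b]$ for $v\in C_V(A)$. *)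

theory Defs
  imports "HOL-Algebra.Algebra"
begin

definition gcomm :: "('g,'m) monoid_scheme \<Rightarrow> 'g \<Rightarrow> 'g \<Rightarrow> 'g" where
  "gcomm G x y = inv\<^bsub>G\<^esub> x \<otimes>\<^bsub>G\<^esub> inv\<^bsub>G\<^esub> y \<otimes>\<^bsub>G\<^esub> x \<otimes>\<^bsub>G\<^esub> y"

fun lower_central :: "('g,'m) monoid_scheme \<Rightarrow> 'g set \<Rightarrow> nat \<Rightarrow> 'g set" where
  "lower_central G H 0 = H"
| "lower_central G H (Suc n) =
     generate G {gcomm G x y | x y. x \<in> lower_central G H n \<and> y \<in> H}"

definition nilpotent_subgroup :: "('g,'m) monoid_scheme \<Rightarrow> 'g set \<Rightarrow> bool" where
  "nilpotent_subgroup G H \<longleftrightarrow> subgroup H G \<and> (\<exists>n. lower_central G H n = {one G})"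

definition conjset :: "('g,'m) monoid_scheme \<Rightarrow> 'g set \<Rightarrow> 'g \<Rightarrow> 'g set" where
  "conjset G S g = (\<lambda>x. inv\<^bsub>G\<^esub> g \<otimes>\<^bsub>G\<^esub> x \<otimes>\<^bsub>G\<^esub> g) ` S"

definition rank_one_group ::
  "('g,'m) monoid_scheme \<Rightarrow> 'g set \<Rightarrow> 'g set \<Rightarrow> ('g \<Rightarrow> 'g) \<Rightarrow> bool" where
  "rank_one_group G A B bf \<longleftrightarrow>
     group G \<and> A \<subseteq> carrier G \<and> B \<subseteq> carrier G \<and>
     carrier G = generate G (A \<union> B) \<and> A \<noteq> B \<and>
     nilpotent_subgroup G A \<and> nilpotent_subgroup G B \<and>
     (\<forall>a \<in> A - {one G}. bf a \<in> B - {one G} \<and> conjset G B a = conjset G A (bf a)) \<and>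
     (\<forall>b \<in> B - {one G}. \<exists>a \<in> A - {one G}. conjset G A b = conjset G B a)"

definition mu :: "('g,'m) monoid_scheme \<Rightarrow> ('g \<Rightarrow> 'g) \<Rightarrow> 'g \<Rightarrow> 'g" where
  "mu G bf a = bf (inv\<^bsub>G\<^esub> a) \<otimes>\<^bsub>G\<^esub> a \<otimes>\<^bsub>G\<^esub> inv\<^bsub>G\<^esub> (bf a)"

definition right_module :: "('g,'m) monoid_scheme \<Rightarrow> ('v::ab_group_add \<Rightarrow> 'g \<Rightarrow> 'v) \<Rightarrow> bool" where
  "right_module G act \<longleftrightarrow>
     (\<forall>v. act v (one G) = v) \<and>
     (\<forall>v. \<forall>g \<in> carrier G. \<forall>h \<in> carrier G. act (act v g) h = act v (g \<otimes>\<^bsub>G\<^esub> h)) \<and>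
     (\<forall>v w. \<forall>g \<in> carrier G. act (v + w) g = act v g + act w g)"

definition vcomm :: "('v::ab_group_add \<Rightarrow> 'g \<Rightarrow> 'v) \<Rightarrow> 'v \<Rightarrow> 'g \<Rightarrow> 'v" where
  "vcomm act v g = - v + act v g"

inductive_set addgen :: "'v::ab_group_add set \<Rightarrow> 'v set" for S where
  zero: "0 \<in> addgen S"
| gen: "s \<in> S \<Longrightarrow> s \<in> addgen S"
| diff: "x \<in> addgen S \<Longrightarrow> y \<in> addgen S \<Longrightarrow> x - y \<in> addgen S"

definition vcomm_set :: "('v::ab_group_add \<Rightarrow> 'g \<Rightarrow> 'v) \<Rightarrow> 'v set \<Rightarrow> 'g set \<Rightarrow> 'v set" where
  "vcomm_set act S Y = addgen {vcomm act x y | x y. x \<in> S \<and> y \<in> Y}"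

definition vcent :: "('v \<Rightarrow> 'g \<Rightarrow> 'v) \<Rightarrow> 'v set \<Rightarrow> 'g set \<Rightarrow> 'v set" where
  "vcent act W Y = {v \<in> W. \<forall>y \<in> Y. act v y = v}"

text \<open>A_0 = C_A([V,A]) \<inter> C_A(V/C_V(A)).\<close>
definition A0 :: "('v::ab_group_add \<Rightarrow> 'g \<Rightarrow> 'v) \<Rightarrow> 'g set \<Rightarrow> 'g set" where
  "A0 act A = {a \<in> A. (\<forall>w \<in> vcomm_set act UNIV A. act w a = w)
                     \<and> (\<forall>v. act v a - v \<in> vcent act UNIV A)}"

text \<open>rho(h_a): for a \<noteq> 1 the action of h_a = mu mu_a on C_V(A); rho(h_1) = 0.\<close>
definition rho_h :: "('g,'m) monoid_scheme \<Rightarrow> ('v::ab_group_add \<Rightarrow> 'g \<Rightarrow> 'v) \<Rightarrow> ('g \<Rightarrow> 'g)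
     \<Rightarrow> 'g \<Rightarrow> 'g \<Rightarrow> 'v \<Rightarrow> 'v" where
  "rho_h G act bf m a v = (if a = (one G) then 0 else act v (m \<otimes>\<^bsub>G\<^esub> mu G bf a))"

end

theory Submission
  imports Defs
begin

context group
begin

lemma cancel_l [simp]: "x \<in> carrier G \<Longrightarrow> y \<in> carrier G \<Longrightarrow> inv x \<otimes> (x \<otimes> y) = y"
  by (simp add: m_assoc[symmetric])

lemma cancel_r [simp]: "x \<in> carrier G \<Longrightarrow> y \<in> carrier G \<Longrightarrow> x \<otimes> (inv x \<otimes> y) = y"
  by (simp add: m_assoc[symmetric])

lemma rk_sub:
  assumes "rank_one_group G A B bf"
  shows "subgroup A G" "subgroup B G"
  using assms unfolding rank_one_group_def nilpotent_subgroup_def by auto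

lemma rk_ax1:
  assumes "rank_one_group G A B bf" "a \<in> A" "a \<noteq> \<one>"
  shows "bf a \<in> B" "bf a \<noteq> \<one>" "conjset G B a = conjset G A (bf a)"
  using assms unfolding rank_one_group_def by auto

lemma rk_ax2:
  assumes "rank_one_group G A B bf" "b \<in> B" "b \<noteq> \<one>"
  shows "\<exists>a \<in> A - {\<one>}. conjset G A b = conjset G B a"
  using assms unfolding rank_one_group_def by auto

lemma conj_mem:
  assumes "conjset G S g = conjset G T h" "x \<in> T"
  shows "\<exists>y\<in>S. inv h \<otimes> x \<otimes> h = inv g \<otimes> y \<otimes> g"
proof -
  have "inv h \<otimes> x \<otimes> h \<in> conjset G T h" unfolding conjset_def using assms(2) by blast
  then show ?thesis using assms(1) unfolding conjset_def by auto
qed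

lemma mu_facts:
  assumes rk: "rank_one_group G A B bf" and t: "t \<in> A" "t \<noteq> \<one>"
  shows "bf (inv t) \<in> B" "bf t \<in> B" "mu G bf t \<in> carrier G"
    "inv (mu G bf t) = bf t \<otimes> inv t \<otimes> inv (bf (inv t))"
proof -
  interpret A: subgroup A G by (rule rk_sub[OF rk])
  interpret B: subgroup B G by (rule rk_sub[OF rk])
  have it: "inv t \<in> A" "inv t \<noteq> \<one>" using t A.subset by auto
  show b1: "bf (inv t) \<in> B" using rk_ax1[OF rk it] by auto
  show b2: "bf t \<in> B" using rk_ax1[OF rk t] by auto
  show "mu G bf t \<in> carrier G" unfolding mu_def using b1 b2 t A.subset B.subset by auto
  show "inv (mu G bf t) = bf t \<otimes> inv t \<otimes> inv (bf (inv t))"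
    unfolding mu_def using b1 b2 t A.subset B.subset by (auto simp: inv_mult_group m_assoc)
qed

lemma conjAB:
  assumes rk: "rank_one_group G A B bf" and t: "t \<in> A" "t \<noteq> \<one>" and al: "\<alpha> \<in> A"
  shows "inv (mu G bf t) \<otimes> \<alpha> \<otimes> mu G bf t \<in> B"
proof -
  interpret A: subgroup A G by (rule rk_sub[OF rk])
  interpret B: subgroup B G by (rule rk_sub[OF rk])
  have it: "inv t \<in> A" "inv t \<noteq> \<one>" using t A.subset by auto
  define b1 where "b1 = bf (inv t)"
  define b2 where "b2 = bf t"
  have b1: "b1 \<in> B" and b2: "b2 \<in> B" using mu_facts[OF rk t] b1_def b2_def by auto
  have c: "conjset G B (inv t) = conjset G A b1" using rk_ax1[OF rk it] b1_def by auto
  obtain \<beta> where be: "\<beta> \<in> B" "inv b1 \<otimes> \<alpha> \<otimes> b1 = inv (inv t) \<otimes> \<beta> \<otimes> inv t"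
    using conj_mem[OF c al] by auto
  have C: "b1 \<in> carrier G" "b2 \<in> carrier G" "\<beta> \<in> carrier G" "t \<in> carrier G" "\<alpha> \<in> carrier G"
    using b1 b2 be t al A.subset B.subset by auto
  have "inv (mu G bf t) \<otimes> \<alpha> \<otimes> mu G bf t = b2 \<otimes> (inv t \<otimes> (inv b1 \<otimes> \<alpha> \<otimes> b1) \<otimes> t) \<otimes> inv b2"
    using C unfolding mu_def b1_def[symmetric] b2_def[symmetric] by (simp add: inv_mult_group m_assoc)
  also have "\<dots> = b2 \<otimes> (inv t \<otimes> (inv (inv t) \<otimes> \<beta> \<otimes> inv t) \<otimes> t) \<otimes> inv b2"
    by (simp only: be(2))
  also have "\<dots> = b2 \<otimes> \<beta> \<otimes> inv b2" using C by (simp add: m_assoc)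
  finally show ?thesis using b2 be(1) by simp
qed

lemma conjBA:
  assumes rk: "rank_one_group G A B bf" and t: "t \<in> A" "t \<noteq> \<one>" and be: "\<beta> \<in> B"
  shows "\<exists>\<alpha>\<in>A. \<beta> = inv (mu G bf t) \<otimes> \<alpha> \<otimes> mu G bf t"
proof -
  interpret A: subgroup A G by (rule rk_sub[OF rk])
  interpret B: subgroup B G by (rule rk_sub[OF rk])
  have it: "inv t \<in> A" "inv t \<noteq> \<one>" using t A.subset by auto
  define b1 where "b1 = bf (inv t)"
  define b2 where "b2 = bf t"
  have b1: "b1 \<in> B" and b2: "b2 \<in> B" using mu_facts[OF rk t] b1_def b2_def by auto
  have c: "conjset G A b1 = conjset G B (inv t)" using rk_ax1[OF rk it] b1_def by auto
  define \<gamma> where "\<gamma> = inv b2 \<otimes> \<beta> \<otimes> b2"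
  have ga: "\<gamma> \<in> B" using b2 be \<gamma>_def by auto
  obtain \<alpha> where al: "\<alpha> \<in> A" "inv (inv t) \<otimes> \<gamma> \<otimes> inv t = inv b1 \<otimes> \<alpha> \<otimes> b1"
    using conj_mem[OF c ga] by auto
  have C: "b1 \<in> carrier G" "b2 \<in> carrier G" "\<beta> \<in> carrier G" "t \<in> carrier G" "\<alpha> \<in> carrier G"
    using b1 b2 be t al A.subset B.subset by auto
  have "inv (mu G bf t) \<otimes> \<alpha> \<otimes> mu G bf t = b2 \<otimes> (inv t \<otimes> (inv b1 \<otimes> \<alpha> \<otimes> b1) \<otimes> t) \<otimes> inv b2"
    using C unfolding mu_def b1_def[symmetric] b2_def[symmetric] by (simp add: inv_mult_group m_assoc)
  also have "\<dots> = b2 \<otimes> (inv t \<otimes> (inv (inv t) \<otimes> \<gamma> \<otimes> inv t) \<otimes> t) \<otimes> inv b2"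
    by (simp only: al(2))
  also have "\<dots> = \<beta>" using C by (simp add: m_assoc \<gamma>_def)
  finally show ?thesis using al(1) by metis
qed

lemma conjA:
  assumes rk: "rank_one_group G A B bf" and t: "t \<in> A" "t \<noteq> \<one>" and al: "\<alpha> \<in> A"
  shows "\<exists>\<beta>\<in>B. \<alpha> = inv (mu G bf t) \<otimes> \<beta> \<otimes> mu G bf t"
proof -
  interpret A: subgroup A G by (rule rk_sub[OF rk])
  interpret B: subgroup B G by (rule rk_sub[OF rk])
  define b1 where "b1 = bf (inv t)"
  define b2 where "b2 = bf t"
  have b1: "b1 \<in> B" and b2: "b2 \<in> B" using mu_facts[OF rk t] b1_def b2_def by auto
  have c: "conjset G B t = conjset G A b2" using rk_ax1[OF rk t] b2_def by auto
  obtain \<beta>' where be: "\<beta>' \<in> B" "inv b2 \<otimes> \<alpha> \<otimes> b2 = inv t \<otimes> \<beta>' \<otimes> t"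
    using conj_mem[OF c al] by auto
  have C: "b1 \<in> carrier G" "b2 \<in> carrier G" "\<beta>' \<in> carrier G" "t \<in> carrier G" "\<alpha> \<in> carrier G"
    using b1 b2 be t al A.subset B.subset by auto
  have "inv (mu G bf t) \<otimes> (b1 \<otimes> \<beta>' \<otimes> inv b1) \<otimes> mu G bf t = b2 \<otimes> (inv t \<otimes> \<beta>' \<otimes> t) \<otimes> inv b2"
    using C unfolding mu_def b1_def[symmetric] b2_def[symmetric] by (simp add: inv_mult_group m_assoc)
  also have "\<dots> = b2 \<otimes> (inv b2 \<otimes> \<alpha> \<otimes> b2) \<otimes> inv b2"
    by (simp only: be(2))
  also have "\<dots> = \<alpha>" using C by (simp add: m_assoc)
  finally show ?thesis using b1 be(1) by (metis B.m_closed B.m_inv_closed)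
qed

end

lemma act_add: "right_module G act \<Longrightarrow> g \<in> carrier G \<Longrightarrow> act (x + y) g = act x g + act y g"
  unfolding right_module_def by auto

lemma act_comp: "right_module G act \<Longrightarrow> g \<in> carrier G \<Longrightarrow> h \<in> carrier G \<Longrightarrow>
    act (act v g) h = act v (g \<otimes>\<^bsub>G\<^esub> h)"
  unfolding right_module_def by auto

lemma act_one: "right_module G act \<Longrightarrow> act v \<one>\<^bsub>G\<^esub> = v"
  unfolding right_module_def by auto

lemma act_zero: "right_module G act \<Longrightarrow> g \<in> carrier G \<Longrightarrow> act 0 g = 0"
  using act_add[of G act g 0 0] by simp

lemma act_minus: "right_module G act \<Longrightarrow> g \<in> carrier G \<Longrightarrow> act (- x) g = - act x g"
  using act_add[of G act g x "- x"] act_zero[of G act g] minus_unique[of "act x g" "act (- x) g"] by simp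

lemma act_diff: "right_module G act \<Longrightarrow> g \<in> carrier G \<Longrightarrow> act (x - y) g = act x g - act y g"
  using act_add[of G act g x "- y"] act_minus[of G act g y] by simp


lemma (in group) main:
  assumes rk: "rank_one_group G A B bf"
    and md: "right_module G act"
    and VAAA: "vcomm_set act (vcomm_set act (vcomm_set act UNIV A) A) A = {0}"
    and CVG: "vcent act UNIV (carrier G) = {0}"
    and e_in: "e \<in> A0 act A - {\<one>}"
    and ab: "a \<in> A" "b \<in> A"
    and v: "v \<in> vcent act UNIV A"
  shows "vcomm act (vcomm act (act v (mu G bf (inv e))) a) b
         = rho_h G act bf (mu G bf (inv e)) (a \<otimes> b) v
           - rho_h G act bf (mu G bf (inv e)) a v
           - rho_h G act bf (mu G bf (inv e)) b v"
proof -
  interpret A: subgroup A G by (rule rk_sub[OF rk])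
  interpret B: subgroup B G by (rule rk_sub[OF rk])
  have gen: "carrier G = generate G (A \<union> B)" using rk unfolding rank_one_group_def by auto
  have e: "e \<in> A" "e \<noteq> \<one>" and eA0: "\<And>w. w \<in> vcomm_set act UNIV A \<Longrightarrow> act w e = w"
    using e_in unfolding A0_def by auto
  have eC: "e \<in> carrier G" using e A.subset by auto
  have t: "inv e \<in> A" "inv e \<noteq> \<one>" using e eC by auto
  define m where "m = mu G bf (inv e)"
  have mC: "m \<in> carrier G" using mu_facts[OF rk t] m_def by auto
  have vA: "\<And>\<alpha>. \<alpha> \<in> A \<Longrightarrow> act v \<alpha> = v" using v unfolding vcent_def by auto
  define w where "w = act v m"
  have wB: "\<And>\<beta>. \<beta> \<in> B \<Longrightarrow> act w \<beta> = w"
  proof -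
    fix \<beta> assume be: "\<beta> \<in> B"
    obtain \<alpha> where al: "\<alpha> \<in> A" "\<beta> = inv m \<otimes> \<alpha> \<otimes> m" using conjBA[OF rk t be] m_def by auto
    have aC: "\<alpha> \<in> carrier G" using al A.subset by auto
    have "act w \<beta> = act v (m \<otimes> (inv m \<otimes> \<alpha> \<otimes> m))" unfolding w_def al(2) using mC aC
      by (simp add: act_comp[OF md])
    also have "\<dots> = act (act v \<alpha>) m" using mC aC by (simp add: act_comp[OF md] m_assoc)
    finally show "act w \<beta> = w" using vA[OF al(1)] w_def by simp
  qed
  define b0 where "b0 = inv m \<otimes> e \<otimes> m"
  have b0B: "b0 \<in> B" using conjAB[OF rk t e(1)] m_def b0_def by auto
  have b0C: "b0 \<in> carrier G" using b0B B.subset by auto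
  have "m \<otimes> b0 \<otimes> inv m = e" unfolding b0_def using mC eC by (simp add: m_assoc)
  hence b01: "b0 \<noteq> \<one>" using mC e(2) by auto
  have wb0: "act w b0 = w" using wB[OF b0B] .
  have fixcomm: "\<And>x \<beta>. \<beta> \<in> B \<Longrightarrow> act (vcomm act x \<beta>) b0 = vcomm act x \<beta>"
  proof -
    fix x \<beta> assume be: "\<beta> \<in> B"
    obtain \<alpha> where al: "\<alpha> \<in> A" "\<beta> = inv m \<otimes> \<alpha> \<otimes> m" using conjBA[OF rk t be] m_def by auto
    have aC: "\<alpha> \<in> carrier G" using al A.subset by auto
    define z where "z = act x (inv m)"
    have x: "x = act z m" unfolding z_def using mC by (simp add: act_comp[OF md] act_one[OF md])
    have "act x \<beta> = act (act z \<alpha>) m" unfolding x al(2) using mC aC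
      by (simp add: act_comp[OF md] m_assoc)
    hence vc: "vcomm act x \<beta> = act (vcomm act z \<alpha>) m"
      unfolding vcomm_def using x mC by (simp add: act_add[OF md] act_minus[OF md] act_diff[OF md])
    have mem: "vcomm act z \<alpha> \<in> vcomm_set act UNIV A"
      unfolding vcomm_set_def using al(1) by (blast intro: addgen.gen)
    have "act (act (vcomm act z \<alpha>) m) b0 = act (act (vcomm act z \<alpha>) e) m"
      unfolding b0_def using mC eC by (simp add: act_comp[OF md] m_assoc)
    also have "\<dots> = act (vcomm act z \<alpha>) m" using eA0[OF mem] by simp
    finally show "act (vcomm act x \<beta>) b0 = vcomm act x \<beta>" using vc by simp
  qed
  define D where "D x = vcomm act w x - rho_h G act bf m x v" for x
  have Dfix: "\<And>x. x \<in> A \<Longrightarrow> act (D x) b0 = D x"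
  proof -
    fix x assume x: "x \<in> A"
    show "act (D x) b0 = D x"
    proof (cases "x = \<one>")
      case True
      then show ?thesis unfolding D_def rho_h_def vcomm_def
        using act_one[OF md] act_zero[OF md b0C] by simp
    next
      case False
      have xC: "x \<in> carrier G" using x A.subset by auto
      define b1 where "b1 = bf (inv x)"
      define b2 where "b2 = bf x"
      have b1: "b1 \<in> B" and b2: "b2 \<in> B" using mu_facts[OF rk x False] b1_def b2_def by auto
      have C: "b1 \<in> carrier G" "b2 \<in> carrier G" using b1 b2 B.subset by auto
      define u where "u = act w (mu G bf x)"
      have r: "rho_h G act bf m x v = u" unfolding rho_h_def u_def w_def using False mC mu_facts[OF rk x False]
        by (simp add: act_comp[OF md])
      have "u = act (act (act w b1) x) (inv b2)" unfolding u_def mu_def b1_def[symmetric] b2_def[symmetric]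
        using C xC by (simp add: act_comp[OF md])
      hence "u = act (act w x) (inv b2)" using wB[OF b1] by simp
      hence ub2: "act u b2 = act w x" using C xC by (simp add: act_comp[OF md] act_one[OF md] m_assoc)
      have Dx: "D x = - w + vcomm act u b2" unfolding D_def r vcomm_def ub2[symmetric] by simp
      show ?thesis unfolding Dx using fixcomm[OF b2] wb0
        by (simp add: act_add[OF md b0C] act_minus[OF md b0C] act_diff[OF md b0C])
    qed
  qed
  have rhoA: "\<And>x \<alpha>. x \<in> A \<Longrightarrow> \<alpha> \<in> A \<Longrightarrow> act (rho_h G act bf m x v) \<alpha> = rho_h G act bf m x v"
  proof -
    fix x \<alpha> assume x: "x \<in> A" and al: "\<alpha> \<in> A"
    have aC: "\<alpha> \<in> carrier G" using al A.subset by auto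
    show "act (rho_h G act bf m x v) \<alpha> = rho_h G act bf m x v"
    proof (cases "x = \<one>")
      case True
      then show ?thesis unfolding rho_h_def using act_zero[OF md aC] by simp
    next
      case False
      have muC: "mu G bf x \<in> carrier G" using mu_facts[OF rk x False] by auto
      obtain \<beta> where be: "\<beta> \<in> B" "\<alpha> = inv (mu G bf x) \<otimes> \<beta> \<otimes> mu G bf x"
        using conjA[OF rk x False al] by auto
      have bC: "\<beta> \<in> carrier G" using be B.subset by auto
      have r: "rho_h G act bf m x v = act w (mu G bf x)" unfolding rho_h_def w_def using False mC muC
        by (simp add: act_comp[OF md])
      have "act (act w (mu G bf x)) \<alpha> = act (act w \<beta>) (mu G bf x)" unfolding be(2) using muC bC
        by (simp add: act_comp[OF md] m_assoc)
      then show ?thesis unfolding r using wB[OF be(1)] by simp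
    qed
  qed
  define y where "y = vcomm act (vcomm act w a) b"
  have yA: "\<And>\<alpha>. \<alpha> \<in> A \<Longrightarrow> act y \<alpha> = y"
  proof -
    fix \<alpha> assume al: "\<alpha> \<in> A"
    have m1: "vcomm act w a \<in> vcomm_set act UNIV A"
      unfolding vcomm_set_def using ab by (blast intro: addgen.gen)
    have m2: "y \<in> vcomm_set act (vcomm_set act UNIV A) A"
      unfolding vcomm_set_def y_def using ab m1 unfolding vcomm_set_def by (blast intro: addgen.gen)
    have "vcomm act y \<alpha> \<in> vcomm_set act (vcomm_set act (vcomm_set act UNIV A) A) A"
      using m2 al unfolding vcomm_set_def[of act "vcomm_set act (vcomm_set act UNIV A) A"]
      by (blast intro: addgen.gen)
    hence "vcomm act y \<alpha> = 0" using VAAA by simp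
    thus "act y \<alpha> = y" unfolding vcomm_def by (metis add_minus_cancel add.right_neutral)
  qed
  have aC: "a \<in> carrier G" and bC: "b \<in> carrier G" using ab A.subset by auto
  define Xv where "Xv = y - (rho_h G act bf m (a \<otimes> b) v - rho_h G act bf m a v - rho_h G act bf m b v)"
  have abA: "a \<otimes> b \<in> A" using ab by auto
  have XvD: "Xv = D (a \<otimes> b) - D a - D b"
    unfolding Xv_def y_def D_def vcomm_def using aC bC
    by (simp add: act_add[OF md] act_minus[OF md] act_diff[OF md] act_comp[OF md] algebra_simps)
  have Xb0: "act Xv b0 = Xv" unfolding XvD using Dfix ab abA
    by (simp add: act_diff[OF md b0C])
  have XA: "\<And>\<alpha>. \<alpha> \<in> A \<Longrightarrow> act Xv \<alpha> = Xv"
  proof -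
    fix \<alpha> assume al: "\<alpha> \<in> A"
    have aC': "\<alpha> \<in> carrier G" using al A.subset by auto
    show "act Xv \<alpha> = Xv" unfolding Xv_def using yA[OF al] rhoA[OF _ al] ab abA
      by (simp add: act_diff[OF md aC'])
  qed
  define H where "H = {g \<in> carrier G. act Xv g = Xv}"
  have subH: "subgroup H G"
  proof (rule subgroupI)
    show "H \<subseteq> carrier G" unfolding H_def by auto
    show "H \<noteq> {}" unfolding H_def using act_one[OF md] by auto
    fix g assume g: "g \<in> H"
    hence gC: "g \<in> carrier G" unfolding H_def by auto
    have "act Xv (inv g) = act (act Xv g) (inv g)" using g unfolding H_def by simp
    also have "\<dots> = Xv" using gC by (simp add: act_comp[OF md] act_one[OF md])
    finally show "inv g \<in> H" using gC unfolding H_def by simp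
  next
    fix g h assume "g \<in> H" "h \<in> H"
    then show "g \<otimes> h \<in> H" unfolding H_def by (auto simp: act_comp[OF md, symmetric])
  qed
  interpret H: subgroup H G by (rule subH)
  have AH: "A \<subseteq> H" unfolding H_def using XA A.subset by auto
  have b0H: "b0 \<in> H" unfolding H_def using Xb0 b0C by auto
  obtain a' where a': "a' \<in> A" "a' \<noteq> \<one>" "conjset G A b0 = conjset G B a'"
    using rk_ax2[OF rk b0B b01] by auto
  have a'C: "a' \<in> carrier G" using a' A.subset by auto
  have BH: "B \<subseteq> H"
  proof
    fix \<beta> assume be: "\<beta> \<in> B"
    have bC': "\<beta> \<in> carrier G" using be B.subset by auto
    obtain \<alpha> where al: "\<alpha> \<in> A" "inv a' \<otimes> \<beta> \<otimes> a' = inv b0 \<otimes> \<alpha> \<otimes> b0"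
      using conj_mem[OF a'(3) be] by auto
    have "inv b0 \<otimes> \<alpha> \<otimes> b0 \<in> H" using al(1) AH b0H by auto
    hence i: "inv a' \<otimes> \<beta> \<otimes> a' \<in> H" using al(2) by simp
    have "a' \<otimes> (inv a' \<otimes> \<beta> \<otimes> a') \<otimes> inv a' \<in> H" using i a' AH by auto
    moreover have "a' \<otimes> (inv a' \<otimes> \<beta> \<otimes> a') \<otimes> inv a' = \<beta>" using a'C bC' by (simp add: m_assoc)
    ultimately show "\<beta> \<in> H" by simp
  qed
  have "carrier G \<subseteq> H" unfolding gen using AH BH by (intro generate_subgroup_incl subH) auto
  hence "Xv \<in> vcent act UNIV (carrier G)" unfolding H_def vcent_def by auto
  hence "Xv = 0" using CVG by simp
  thus ?thesis unfolding Xv_def y_def w_def m_def by simp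
qed

theorem proposition4p4:
  fixes G :: "('g,'m) monoid_scheme" and A B :: "'g set" and bf :: "'g \<Rightarrow> 'g"
    and act :: "'v::ab_group_add \<Rightarrow> 'g \<Rightarrow> 'v" and e :: 'g
  assumes rk: "rank_one_group G A B bf"
    and md: "right_module G act"
    and VAAA: "vcomm_set act (vcomm_set act (vcomm_set act UNIV A) A) A = {0}"
    and VGGG: "vcomm_set act (vcomm_set act (vcomm_set act UNIV (carrier G)) (carrier G)) (carrier G) \<noteq> {0}"
    and VG: "vcomm_set act UNIV (carrier G) = UNIV"
    and CVG: "vcent act UNIV (carrier G) = {0}"
    and e_in: "e \<in> A0 act A - {one G}"
    and e_sq: "(\<forall>v::'v. v + v = 0) \<and> (\<exists>x \<in> A. \<exists>y \<in> A. x \<otimes>\<^bsub>G\<^esub> y \<noteq> y \<otimes>\<^bsub>G\<^esub> x)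
               \<longrightarrow> (\<exists>a \<in> A. e = a \<otimes>\<^bsub>G\<^esub> a)"
    and ab: "a \<in> A" "b \<in> A"
    and v: "v \<in> vcent act UNIV A"
  shows "vcomm act (vcomm act (act v (mu G bf (inv\<^bsub>G\<^esub> e))) a) b
         = rho_h G act bf (mu G bf (inv\<^bsub>G\<^esub> e)) (a \<otimes>\<^bsub>G\<^esub> b) v
           - rho_h G act bf (mu G bf (inv\<^bsub>G\<^esub> e)) a v
           - rho_h G act bf (mu G bf (inv\<^bsub>G\<^esub> e)) b v"
  using group.main[OF _ rk md VAAA CVG _ ab v] e_in rk unfolding rank_one_group_def by blast

end
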